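(* Let $r\ge 2$, $e\ge 1$ and $0\le p\le\lfloor re/2\rfloor$ be integers, and let $Q$ be a generic binary form of degree $r$ (i.e. with indeterminate coefficients). Then the transvectant $(Q^e,Q^e)_{2p}$ is not identically zero.
   Context: For binary forms $A(x_0,x_1)$, $B(x_0,x_1)$ of degrees $a,b$ and an integer $k\ge0$, the $k$-th transvectant is $(A,B)_k=\frac{(a-k)!\,(b-k)!}{a!\,b!}\bigl[\Omega^k A(x_0,x_1)B(y_0,y_1)\bigr]_{\underline{y}:=\underline{x}}$, where $\Omega=\frac{\partial^2}{\partial x_0\partial y_1}-\frac{\partial^2}{\partial x_1\partial y_0}$ (Cayley's Omega operator); it is a binary form of degree $a+b-2k$. *)

theory Defs
  imports "HOL-Computational_Algebra.Polynomial" "HOL-Library.Poly_Mapping"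
begin

text \<open>A binary form of degree d,
  F(x0,x1) = sum_{i<=d} c_i x0^(d-i) x1^i, is represented by the pair (d, f)
  where f = sum_i c_i t^i is its dehomogenisation (t = x1/x0), a univariate
  polynomial of degree at most d.  Then F = x0^d f(x1/x0).\<close>

type_synonym 'a bform = "nat \<times> 'a poly"

text \<open>Partial derivatives: d/dx1 F = x0^(d-1) f'(t) and
  d/dx0 F = x0^(d-1) (d f(t) - t f'(t)).\<close>

definition bf_dx0 :: "'a::{comm_semiring_1,semiring_no_zero_divisors,comm_ring} bform \<Rightarrow> 'a bform" where
  "bf_dx0 F = (fst F - 1, smult (of_nat (fst F)) (snd F) - pCons 0 (pderiv (snd F)))"

definition bf_dx1 :: "'a::{comm_semiring_1,semiring_no_zero_divisors} bform \<Rightarrow> 'a bform" where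
  "bf_dx1 F = (fst F - 1, pderiv (snd F))"

definition bf_power :: "'a::comm_semiring_1 bform \<Rightarrow> nat \<Rightarrow> 'a bform" where
  "bf_power F e = (fst F * e, (snd F) ^ e)"

text \<open>[Omega^k A(x)B(y)]_{y:=x}, with Omega = d^2/dx0 dy1 - d^2/dx1 dy0, so
  Omega^k = sum_j (-1)^j (k choose j) dx0^(k-j) dx1^j dy0^j dy1^(k-j).
  The result is a form of degree a+b-2k.\<close>

definition omega_bracket :: "nat \<Rightarrow> 'a::idom bform \<Rightarrow> 'a bform \<Rightarrow> 'a bform" where
  "omega_bracket k A B = (fst A + fst B - 2 * k,
     (\<Sum>j\<le>k. smult ((-1) ^ j * of_nat (k choose j))
        (snd ((bf_dx0 ^^ (k - j)) ((bf_dx1 ^^ j) A)) *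
         snd ((bf_dx0 ^^ j) ((bf_dx1 ^^ (k - j)) B)))))"

definition transvectant ::
  "nat \<Rightarrow> (('v::linorder \<Rightarrow>\<^sub>0 nat) \<Rightarrow>\<^sub>0 'k::linordered_field) bform \<Rightarrow> (('v \<Rightarrow>\<^sub>0 nat) \<Rightarrow>\<^sub>0 'k) bform
     \<Rightarrow> (('v \<Rightarrow>\<^sub>0 nat) \<Rightarrow>\<^sub>0 'k) bform" where
  "transvectant k A B =
     (let c = (fact (fst A - k) * fact (fst B - k)) / (fact (fst A) * fact (fst B)) :: 'k
      in (fst (omega_bracket k A B), smult (Poly_Mapping.single 0 c) (snd (omega_bracket k A B))))"

text \<open>The generic binary form of degree r: Q = sum_{i<=r} a_i x0^(r-i) x1^i whose
  coefficients a_0,...,a_r are independent indeterminates over the rationals.\<close>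

definition generic_bform :: "nat \<Rightarrow> ((nat \<Rightarrow>\<^sub>0 nat) \<Rightarrow>\<^sub>0 rat) bform" where
  "generic_bform r = (r, \<Sum>i\<le>r. monom (Poly_Mapping.single (Poly_Mapping.single i 1) 1) i)"

end

theory Submission
  imports Defs
begin

definition mon :: "(nat \<Rightarrow> rat) \<Rightarrow> (nat \<Rightarrow>\<^sub>0 nat) \<Rightarrow> rat" where
  "mon x m = (\<Prod>v\<in>Poly_Mapping.keys m. x v ^ Poly_Mapping.lookup m v)"

definition ev :: "(nat \<Rightarrow> rat) \<Rightarrow> ((nat \<Rightarrow>\<^sub>0 nat) \<Rightarrow>\<^sub>0 rat) \<Rightarrow> rat" where
  "ev x p = (\<Sum>m\<in>Poly_Mapping.keys p. Poly_Mapping.lookup p m * mon x m)"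

lemma mon_superset:
  assumes "finite S" "Poly_Mapping.keys m \<subseteq> S"
  shows "mon x m = (\<Prod>v\<in>S. x v ^ Poly_Mapping.lookup m v)"
  unfolding mon_def
  by (rule prod.mono_neutral_left) (use assms in \<open>auto simp: in_keys_iff\<close>)

lemma mon_add: "mon x (m1 + m2) = mon x m1 * mon x m2"
proof -
  let ?S = "Poly_Mapping.keys m1 \<union> Poly_Mapping.keys m2"
  have "mon x (m1 + m2) = (\<Prod>v\<in>?S. x v ^ Poly_Mapping.lookup (m1 + m2) v)"
    by (rule mon_superset) (auto simp: keys_add)
  also have "\<dots> = (\<Prod>v\<in>?S. x v ^ Poly_Mapping.lookup m1 v * x v ^ Poly_Mapping.lookup m2 v)"
    by (simp add: lookup_add power_add)
  also have "\<dots> = mon x m1 * mon x m2"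
    by (simp add: prod.distrib mon_superset[of ?S])
  finally show ?thesis .
qed

lemma mon_zero: "mon x 0 = 1"
  by (simp add: mon_def)

lemma ev_superset:
  assumes "finite S" "Poly_Mapping.keys p \<subseteq> S"
  shows "ev x p = (\<Sum>m\<in>S. Poly_Mapping.lookup p m * mon x m)"
  unfolding ev_def
  by (rule sum.mono_neutral_left) (use assms in \<open>auto simp: in_keys_iff\<close>)

lemma ev_zero [simp]: "ev x 0 = 0"
  by (simp add: ev_def)

lemma ev_add: "ev x (p + q) = ev x p + ev x q"
proof -
  let ?S = "Poly_Mapping.keys p \<union> Poly_Mapping.keys q"
  have "ev x (p + q) = (\<Sum>m\<in>?S. Poly_Mapping.lookup (p + q) m * mon x m)"
    by (rule ev_superset) (auto simp: keys_add)
  also have "\<dots> = (\<Sum>m\<in>?S. Poly_Mapping.lookup p m * mon x m + Poly_Mapping.lookup q m * mon x m)"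
    by (simp add: lookup_add algebra_simps)
  also have "\<dots> = ev x p + ev x q"
    by (simp add: sum.distrib ev_superset[of ?S])
  finally show ?thesis .
qed

lemma lookup_single_if: "Poly_Mapping.lookup (Poly_Mapping.single m c) k = (if m = k then c else 0)"
  by (simp add: lookup_single when_def)

lemma ev_single: "ev x (Poly_Mapping.single m c) = c * mon x m"
  by (subst ev_superset[of "{m}"]) (auto simp: lookup_single_if)

lemma ev_sum: "ev x (sum f A) = (\<Sum>a\<in>A. ev x (f a))"
  by (induction A rule: infinite_finite_induct) (auto simp: ev_add)

lemma pm_expand: "p = (\<Sum>m\<in>Poly_Mapping.keys p. Poly_Mapping.single m (Poly_Mapping.lookup p m))"
  by (rule poly_mapping_eqI) (auto simp: lookup_sum lookup_single_if in_keys_iff)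

lemma ev_mult: "ev x (p * q) = ev x p * ev x q"
proof -
  have "p * q = (\<Sum>m\<in>Poly_Mapping.keys p. Poly_Mapping.single m (Poly_Mapping.lookup p m)) * (\<Sum>m\<in>Poly_Mapping.keys q. Poly_Mapping.single m (Poly_Mapping.lookup q m))"
    using pm_expand by metis
  also have "\<dots> = (\<Sum>m\<in>Poly_Mapping.keys p. \<Sum>m'\<in>Poly_Mapping.keys q. Poly_Mapping.single (m + m') (Poly_Mapping.lookup p m * Poly_Mapping.lookup q m'))"
    by (simp add: sum_product mult_single)
  finally have "ev x (p * q) = (\<Sum>m\<in>Poly_Mapping.keys p. \<Sum>m'\<in>Poly_Mapping.keys q. (Poly_Mapping.lookup p m * mon x m) * (Poly_Mapping.lookup q m' * mon x m'))"
    by (simp add: ev_sum ev_single mon_add algebra_simps)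
  also have "\<dots> = ev x p * ev x q"
    by (simp add: ev_def sum_product)
  finally show ?thesis .
qed

lemma ev_one [simp]: "ev x 1 = 1"
  by (metis ev_single mon_zero mult_1 single_one)

lemma ev_uminus: "ev x (- p) = - ev x p"
  using ev_add[of x p "- p"] by simp

lemma ev_of_nat: "ev x (of_nat n) = of_nat n"
  by (induction n) (auto simp: ev_add)

lemma ev_power: "ev x (p ^ n) = ev x p ^ n"
  by (induction n) (auto simp: ev_mult)

lemma ev_fact: "ev x (fact n) = fact n"
  by (metis ev_of_nat of_nat_fact)

lemma map_ev_mult: "map_poly (ev x) (p * q) = map_poly (ev x) p * map_poly (ev x) q"
  by (rule poly_eqI) (simp add: coeff_map_poly coeff_mult ev_sum ev_mult)

lemma map_ev_power: "map_poly (ev x) (p ^ n) = map_poly (ev x) p ^ n"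
proof (induction n)
  case 0
  show ?case by (rule poly_eqI) (simp add: coeff_map_poly coeff_1)
next
  case (Suc n)
  then show ?case by (simp add: map_ev_mult)
qed

lemma dx1_iter: "(bf_dx1 ^^ j) F = (fst F - j, (pderiv ^^ j) (snd F))"
  by (induction j) (auto simp: bf_dx1_def)

lemma dx0_iter:
  fixes F :: "'a::idom bform"
  shows "fst ((bf_dx0 ^^ m) F) = fst F - m \<and>
     coeff (snd ((bf_dx0 ^^ m) F)) 0 = of_nat (\<Prod>i<m. fst F - i) * coeff (snd F) 0"
proof (induction m)
  case 0
  then show ?case by simp
next
  case (Suc m)
  obtain d g where dg: "(bf_dx0 ^^ m) F = (d, g)" by (cases "(bf_dx0 ^^ m) F")
  have s: "(bf_dx0 ^^ Suc m) F = (d - 1, smult (of_nat d) g - pCons 0 (pderiv g))"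
    by (simp add: dg bf_dx0_def)
  from Suc dg have d: "d = fst F - m" and c: "coeff g 0 = of_nat (\<Prod>i<m. fst F - i) * coeff (snd F) 0"
    by auto
  show ?case
    unfolding s by (simp add: d c coeff_pCons_0 prod.lessThan_Suc mult_ac)
qed

lemma pderiv_iter_coeff0:
  fixes f :: "'a::idom poly"
  shows "coeff ((pderiv ^^ j) f) 0 = of_nat (fact j) * coeff f j"
proof (induction j arbitrary: f)
  case 0
  then show ?case by simp
next
  case (Suc j)
  have "(pderiv ^^ Suc j) f = (pderiv ^^ j) (pderiv f)"
    by (simp add: funpow_Suc_right del: funpow.simps)
  then show ?case using Suc
    by (simp add: coeff_pderiv algebra_simps)
qed

lemma term_coeff0:
  fixes f :: "'a::idom poly"
  shows "coeff (snd ((bf_dx0 ^^ m) ((bf_dx1 ^^ j) (d, f)))) 0 =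
     of_nat (\<Prod>i<m. d - j - i) * (of_nat (fact j) * coeff f j)"
  using dx0_iter[of m "(bf_dx1 ^^ j) (d, f)"] by (simp add: dx1_iter pderiv_iter_coeff0)

lemma omega_coeff0:
  fixes f :: "'a::idom poly"
  shows "coeff (snd (omega_bracket k (d, f) (d, f))) 0 =
    (\<Sum>j\<le>k. ((-1) ^ j * of_nat (k choose j)) *
      ((of_nat (\<Prod>i<k - j. d - j - i) * (of_nat (fact j) * coeff f j)) *
       (of_nat (\<Prod>i<j. d - (k - j) - i) * (of_nat (fact (k - j)) * coeff f (k - j)))))"
  by (simp add: omega_bracket_def coeff_sum coeff_mult_0 term_coeff0)

lemma quad_mult_coeff:
  fixes Q :: "rat poly"
  shows "coeff ([:1,0,1:] * Q) j = coeff Q j + (if j < 2 then 0 else coeff Q (j - 2))"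
  by (cases j; cases "j - 1") (auto simp: coeff_pCons)

lemma quad_power:
  "\<forall>j. coeff ([:1,0,1:] ^ N :: rat poly) j \<ge> 0 \<and> (odd j \<longrightarrow> coeff ([:1,0,1:] ^ N :: rat poly) j = 0)
     \<and> (even j \<and> j \<le> 2 * N \<longrightarrow> coeff ([:1,0,1:] ^ N :: rat poly) j > 0)"
proof (induction N)
  case 0
  then show ?case by (auto simp: coeff_1 odd_pos)
next
  case (Suc N)
  show ?case
  proof
    fix j
    let ?Q = "[:1,0,1:] ^ N :: rat poly"
    have e: "coeff ([:1,0,1:] ^ Suc N :: rat poly) j = coeff ?Q j + (if j < 2 then 0 else coeff ?Q (j - 2))"
      by (simp only: power_Suc quad_mult_coeff)
    have "coeff ([:1,0,1:] ^ Suc N :: rat poly) j \<ge> 0"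
      unfolding e using Suc by auto
    moreover have "odd j \<longrightarrow> coeff ([:1,0,1:] ^ Suc N :: rat poly) j = 0"
      unfolding e using Suc by auto
    moreover have "even j \<and> j \<le> 2 * Suc N \<longrightarrow> coeff ([:1,0,1:] ^ Suc N :: rat poly) j > 0"
    proof
      assume j: "even j \<and> j \<le> 2 * Suc N"
      show "coeff ([:1,0,1:] ^ Suc N :: rat poly) j > 0"
      proof (cases "j \<le> 2 * N")
        case True
        have "coeff ?Q j > 0" using Suc j True by blast
        moreover have "(if j < 2 then 0 else coeff ?Q (j - 2)) \<ge> 0" using Suc by auto
        ultimately show ?thesis unfolding e by linarith
      next
        case False
        then have "j - 2 \<le> 2 * N" "even (j - 2)" "\<not> j < 2" using j by auto
        then have "coeff ?Q (j - 2) > 0" using Suc by blast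
        moreover have "coeff ?Q j \<ge> 0" using Suc by auto
        ultimately show ?thesis unfolding e using \<open>\<not> j < 2\<close> by simp
      qed
    qed
    ultimately show "coeff ([:1,0,1:] ^ Suc N :: rat poly) j \<ge> 0 \<and> (odd j \<longrightarrow> coeff ([:1,0,1:] ^ Suc N :: rat poly) j = 0)
     \<and> (even j \<and> j \<le> 2 * Suc N \<longrightarrow> coeff ([:1,0,1:] ^ Suc N :: rat poly) j > 0)" by blast
  qed
qed

lemma ev_prod: "ev x (prod f A) = (\<Prod>a\<in>A. ev x (f a))"
  by (induction A rule: infinite_finite_induct) (auto simp: ev_mult)

lemma ev_var: "ev x (Poly_Mapping.single (Poly_Mapping.single i 1) 1) = x i"
  by (simp add: ev_single mon_def lookup_single_if)

theorem mainTheorem4: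
  fixes r e p :: nat
  assumes "r \<ge> 2" and "e \<ge> 1" and "p \<le> (r * e) div 2"
  shows "snd (transvectant (2 * p) (bf_power (generic_bform r) e) (bf_power (generic_bform r) e)) \<noteq> 0"
proof -
  define h where "h = r div 2"
  define H where "H = ([:1,0,1:] ^ h :: rat poly)"
  define x where "x = (\<lambda>i. coeff H i)"
  define n where "n = r * e"
  define k where "k = 2 * p"
  define N where "N = h * e"
  define G where "G = (\<Sum>i\<le>r. monom (Poly_Mapping.single (Poly_Mapping.single i (1::nat)) (1::rat)) i)"
  define cc where "cc = (\<lambda>j. coeff ([:1,0,1:] ^ N :: rat poly) j)"
  have A: "bf_power (generic_bform r) e = (n, G ^ e)"
    by (simp add: bf_power_def generic_bform_def n_def G_def)
  have h1: "h \<ge> 1" "2 * h \<le> r" using assms(1) by (auto simp: h_def)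
  have "r \<le> 4 * h" using h1 assms(1) unfolding h_def by linarith
  then have "r * e \<le> 4 * h * e" by simp
  then have pN: "p \<le> 2 * N" using assms(3) unfolding N_def by linarith
  have kn: "k \<le> n" using assms(3) unfolding k_def n_def by linarith
  have degH: "degree H \<le> r"
  proof -
    have "degree H \<le> degree ([:1,0,1:] :: rat poly) * h" unfolding H_def by (rule degree_power_le)
    then show ?thesis using h1 by simp
  qed
  have mapG: "map_poly (ev x) G = H"
  proof (rule poly_eqI)
    fix i
    have "coeff (map_poly (ev x) G) i = ev x (coeff G i)" by (simp add: coeff_map_poly)
    also have "coeff G i = (if i \<le> r then Poly_Mapping.single (Poly_Mapping.single i (1::nat)) (1::rat) else 0)"
      by (simp add: G_def coeff_sum coeff_monom)
    finally show "coeff (map_poly (ev x) G) i = coeff H i"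
      using degH ev_var[of x i] by (auto simp: x_def coeff_eq_0)
  qed
  have cg: "ev x (coeff (G ^ e) j) = cc j" for j
  proof -
    have "ev x (coeff (G ^ e) j) = coeff (map_poly (ev x) (G ^ e)) j" by (simp add: coeff_map_poly)
    also have "\<dots> = coeff (H ^ e) j" by (simp add: map_ev_power mapG)
    finally show ?thesis by (simp add: cc_def N_def H_def power_mult)
  qed
  define T where "T = (\<lambda>j. ((-1) ^ j * of_nat (k choose j)) *
      ((of_nat (\<Prod>i<k - j. n - j - i) * (of_nat (fact j) * cc j)) *
       (of_nat (\<Prod>i<j. n - (k - j) - i) * (of_nat (fact (k - j)) * cc (k - j)))) :: rat)"
  define P where "P = snd (omega_bracket k (n, G ^ e) (n, G ^ e))"
  have evP: "ev x (coeff P 0) = (\<Sum>j\<le>k. T j)"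
    unfolding P_def omega_coeff0 T_def
    by (simp add: ev_sum ev_mult ev_power ev_uminus ev_of_nat cg ev_fact ev_prod)
  have qp: "\<And>j. cc j \<ge> 0" "\<And>j. odd j \<Longrightarrow> cc j = 0" "\<And>j. even j \<Longrightarrow> j \<le> 2 * N \<Longrightarrow> cc j > 0"
    using quad_power[of N] unfolding cc_def by auto
  have Tnn: "T j \<ge> 0" for j
  proof (cases "even j")
    case True
    then show ?thesis unfolding T_def using qp(1) by (auto intro!: mult_nonneg_nonneg prod_nonneg)
  next
    case False
    then show ?thesis unfolding T_def using qp(2) by simp
  qed
  define j0 where "j0 = 2 * min p N"
  have j0k: "j0 \<le> k" unfolding j0_def k_def by simp
  have "T j0 > 0"
  proof -
    have c1: "cc j0 > 0" using qp(3) unfolding j0_def by simp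
    have "k - j0 = 2 * (p - min p N)" unfolding j0_def k_def by simp
    moreover have "p - min p N \<le> N" using pN by simp
    ultimately have c2: "cc (k - j0) > 0" using qp(3) by simp
    have p1: "(\<Prod>i<k - j0. n - j0 - i) > 0"
      using kn by (auto intro!: prod_pos)
    have p2: "(\<Prod>i<j0. n - (k - j0) - i) > 0"
      using kn j0k by (auto intro!: prod_pos)
    have q1: "(of_nat (\<Prod>i<k - j0. n - j0 - i) :: rat) > 0" using p1 by (simp only: of_nat_0_less_iff)
    have q2: "(of_nat (\<Prod>i<j0. n - (k - j0) - i) :: rat) > 0" using p2 by (simp only: of_nat_0_less_iff)
    have q3: "(of_nat (k choose j0) :: rat) > 0" using j0k by simp
    have m1: "(-1::rat) ^ j0 = 1" unfolding j0_def by simp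
    show ?thesis unfolding T_def m1 mult_1_left
      by (intro mult_pos_pos q1 q2 q3 c1 c2) simp_all
  qed
  then have "(\<Sum>j\<le>k. T j) > 0"
    using j0k Tnn by (intro sum_pos2[of _ j0]) auto
  then have evpos: "ev x (coeff P 0) > 0" using evP by simp
  define c :: rat where "c = (fact (n - k) * fact (n - k)) / (fact n * fact n)"
  have cpos: "c > 0" unfolding c_def by simp
  have tv: "snd (transvectant k (n, G ^ e) (n, G ^ e)) = smult (Poly_Mapping.single 0 c) P"
    by (simp add: transvectant_def c_def P_def Let_def)
  have "ev x (coeff (smult (Poly_Mapping.single 0 c) P) 0) = c * ev x (coeff P 0)"
    by (simp add: ev_mult ev_single mon_zero)
  also have "\<dots> > 0" using cpos evpos by simp
  finally have "coeff (smult (Poly_Mapping.single 0 c) P) 0 \<noteq> 0" by auto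
  then have "smult (Poly_Mapping.single 0 c) P \<noteq> 0" by auto
  then show ?thesis using tv A k_def by simp
qed

end
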